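(* Let $n\ge 1$ and let $\mathcal{M}^n$ denote the set of real symmetric positive semidefinite $n\times n$ matrices. Let $F:(\mathcal{M}^n)^n\to\mathbb{R}$ be a nonnegative function which is additive in each variable (i.e. $F(\dots,A+A',\dots)=F(\dots,A,\dots)+F(\dots,A',\dots)$ in each argument, the others fixed). If there is a constant $c$ such that $F(A_1,\dots,A_n)\le c\,D(A_1,\dots,A_n)$ for all $A_1,\dots,A_n\in\mathcal{M}^n$, then there is a constant $a$ with $F=a\,D$ on $(\mathcal{M}^n)^n$, where $D$ is the mixed discriminant.
   Context: The mixed discriminant $D:(\mathcal{M}^n)^n\to\mathbb{R}$ is the unique symmetric function such that $\det(\lambda_1A_1+\dots+\lambda_mA_m)=\sum_{i_1,\dots,i_n=1}^m\lambda_{i_1}\cdots\lambda_{i_n}D(A_{i_1},\dots,A_{i_n})$ for all $m\in\mathbb{N}$, $A_1,\dots,A_m\in\mathcal{M}^n$ and $\lambda_1,\dots,\lambda_m\ge 0$. *)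

theory Defs
  imports "HOL-Analysis.Analysis"
begin

text \<open>Real symmetric positive semidefinite n x n matrices (the set M^n); the
  dimension n is the cardinality of the finite index type 'n.\<close>
definition psd :: "real^'n^'n \<Rightarrow> bool" where
  "psd A \<longleftrightarrow> transpose A = A \<and> (\<forall>x. 0 \<le> x \<bullet> (A *v x))"

definition psd_tuple :: "('n \<Rightarrow> real^'n^'n) \<Rightarrow> bool" where
  "psd_tuple A \<longleftrightarrow> (\<forall>k. psd (A k))"

definition is_mixed_discr :: "(('n::finite \<Rightarrow> real^'n^'n) \<Rightarrow> real) \<Rightarrow> bool" where
  "is_mixed_discr D \<longleftrightarrow>
     (\<forall>A p. psd_tuple A \<and> p permutes (UNIV::'n set) \<longrightarrow> D (A \<circ> p) = D A) \<and>
     (\<forall>(m::nat) (A::nat \<Rightarrow> real^'n^'n) (lam::nat \<Rightarrow> real).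
        (\<forall>j<m. psd (A j)) \<and> (\<forall>j<m. 0 \<le> lam j) \<longrightarrow>
        det (\<Sum>j<m. lam j *\<^sub>R A j) =
          (\<Sum>f\<in>{f::'n \<Rightarrow> nat. \<forall>k. f k < m}. (\<Prod>k\<in>UNIV. lam (f k)) * D (\<lambda>k. A (f k))))"

text \<open>The mixed discriminant (unique on (M^n)^n).\<close>
definition mixed_discr :: "('n::finite \<Rightarrow> real^'n^'n) \<Rightarrow> real" where
  "mixed_discr = (SOME D. is_mixed_discr D)"

end

theory Submission
  imports Defs
begin


definition D0 :: "('n::finite \<Rightarrow> real^'n^'n) \<Rightarrow> real" where
  "D0 A = (\<Sum>\<sigma>\<in>{p. p permutes (UNIV::'n set)}. det (\<chi> i. A (\<sigma> i) $ i)) / fact CARD('n)"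

lemma D0_sym: fixes p :: "'n::finite \<Rightarrow> 'n" assumes "p permutes UNIV"
  shows "D0 (A \<circ> p) = D0 A"
proof -
  have "(\<Sum>\<sigma>\<in>{p. p permutes (UNIV::'n set)}. det (\<chi> i. A (\<sigma> i) $ i)) =
        (\<Sum>\<sigma>\<in>{p. p permutes (UNIV::'n set)}. det (\<chi> i. A ((p \<circ> \<sigma>) i) $ i))"
    using setum_permutations_compose_left[OF assms, of "\<lambda>\<sigma>. det (\<chi> i. A (\<sigma> i) $ i)"]
    by (simp add: o_def)
  then show ?thesis unfolding D0_def by (simp add: o_def)
qed

lemma finite_funs: "finite {f::'n::finite \<Rightarrow> nat. \<forall>k. f k < m}"
proof -
  have "{f::'n \<Rightarrow> nat. \<forall>k. f k < m} = PiE UNIV (\<lambda>_. {..<m})"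
    by (auto simp: PiE_def Pi_def extensional_def)
  then show ?thesis by (simp add: finite_PiE)
qed

lemma Fm_PiE: "{f::'n::finite \<Rightarrow> nat. \<forall>k. f k < m} = PiE UNIV (\<lambda>_. {..<m})"
  by (auto simp: PiE_def Pi_def extensional_def)

lemma det_lin_sum:
  fixes a :: "'n::finite \<Rightarrow> 'b \<Rightarrow> real^'n"
  assumes "finite S"
  shows "det (\<chi> i. \<Sum>j\<in>S. a i j) = (\<Sum>g\<in>PiE UNIV (\<lambda>_. S). det (\<chi> i. a i (g i)))"
proof -
  have "det (\<chi> i. \<Sum>j\<in>S. a i j) = (\<Sum>p\<in>{p. p permutes (UNIV::'n set)}. of_int (sign p) *
          (\<Sum>g\<in>PiE UNIV (\<lambda>_. S). \<Prod>i\<in>UNIV. a i (g i) $ p i))"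
    unfolding det_def
    by (intro sum.cong refl arg_cong2[where f="(*)"])
       (simp add: sum_component prod_sum_PiE[OF finite assms])
  also have "\<dots> = (\<Sum>g\<in>PiE UNIV (\<lambda>_. S). det (\<chi> i. a i (g i)))"
    unfolding det_def by (simp add: sum_distrib_left sum.swap[of _ "{p. p permutes UNIV}"])
  finally show ?thesis .
qed

lemma det_expand:
  fixes A :: "nat \<Rightarrow> real^'n::finite^'n"
  shows "det (\<Sum>j<m. lam j *\<^sub>R A j) =
     (\<Sum>g\<in>{g::'n \<Rightarrow> nat. \<forall>k. g k < m}. (\<Prod>k\<in>UNIV. lam (g k)) * det (\<chi> i. A (g i) $ i))"
proof -
  have "(\<Sum>j<m. lam j *\<^sub>R A j) = (\<chi> i. \<Sum>j\<in>{..<m}. lam j *s (A j $ i))"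
    by (simp add: vec_eq_iff sum_component scalar_mult_eq_scaleR)
  then have "det (\<Sum>j<m. lam j *\<^sub>R A j) =
     (\<Sum>g\<in>PiE UNIV (\<lambda>_. {..<m}). det (\<chi> i. lam (g i) *s (A (g i) $ i)))"
    using det_lin_sum[of "{..<m}" "\<lambda>i j. lam j *s A j $ i"] by simp
  also have "\<dots> = (\<Sum>g\<in>{g::'n \<Rightarrow> nat. \<forall>k. g k < m}. (\<Prod>k\<in>UNIV. lam (g k)) * det (\<chi> i. A (g i) $ i))"
    by (simp add: det_rows_mul Fm_PiE)
  finally show ?thesis .
qed

lemma D0_expand:
  fixes A :: "nat \<Rightarrow> real^'n::finite^'n"
  shows "(\<Sum>f\<in>{f::'n \<Rightarrow> nat. \<forall>k. f k < m}. (\<Prod>k\<in>UNIV. lam (f k)) * D0 (\<lambda>k. A (f k)))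
     = det (\<Sum>j<m. lam j *\<^sub>R A j)"
proof -
  let ?Fm = "{f::'n \<Rightarrow> nat. \<forall>k. f k < m}"
  let ?P = "{p. p permutes (UNIV::'n set)}"
  let ?T = "\<lambda>g. (\<Prod>k\<in>UNIV. lam (g k)) * det (\<chi> i. A (g i) $ i)"
  have inner: "(\<Sum>f\<in>?Fm. (\<Prod>k\<in>UNIV. lam (f k)) * det (\<chi> i. A (f (\<sigma> i)) $ i)) = sum ?T ?Fm"
    if s: "\<sigma> permutes UNIV" for \<sigma>
  proof -
    have "(\<Sum>f\<in>?Fm. (\<Prod>k\<in>UNIV. lam (f k)) * det (\<chi> i. A (f (\<sigma> i)) $ i)) = (\<Sum>f\<in>?Fm. ?T (f \<circ> \<sigma>))"
    proof (rule sum.cong[OF refl])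
      fix f show "(\<Prod>k\<in>UNIV. lam (f k)) * det (\<chi> i. A (f (\<sigma> i)) $ i) = ?T (f \<circ> \<sigma>)"
        using prod.permute[OF s, of "\<lambda>k. lam (f k)"] by (simp add: o_def)
    qed
    also have "\<dots> = sum ?T ?Fm"
      by (rule sum.reindex_bij_witness[where i="\<lambda>g. g \<circ> inv \<sigma>" and j="\<lambda>f. f \<circ> \<sigma>"])
         (auto simp: o_def permutes_inverses[OF s])
    finally show ?thesis .
  qed
  have "(\<Sum>f\<in>?Fm. (\<Prod>k\<in>UNIV. lam (f k)) * D0 (\<lambda>k. A (f k))) =
     (\<Sum>f\<in>?Fm. \<Sum>\<sigma>\<in>?P. (\<Prod>k\<in>UNIV. lam (f k)) * det (\<chi> i. A (f (\<sigma> i)) $ i)) / fact CARD('n)"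
    by (simp add: D0_def sum_divide_distrib sum_distrib_left)
  also have "\<dots> = (\<Sum>\<sigma>\<in>?P. \<Sum>f\<in>?Fm. (\<Prod>k\<in>UNIV. lam (f k)) * det (\<chi> i. A (f (\<sigma> i)) $ i)) / fact CARD('n)"
    by (subst sum.swap) simp
  also have "\<dots> = (\<Sum>\<sigma>\<in>?P. sum ?T ?Fm) / fact CARD('n)"
    using inner by simp
  also have "\<dots> = sum ?T ?Fm"
    by (simp add: card_permutations)
  finally show ?thesis by (simp add: det_expand)
qed

lemma is_mixed_D0: "is_mixed_discr (D0 :: ('n::finite \<Rightarrow> real^'n^'n) \<Rightarrow> real)"
  unfolding is_mixed_discr_def
proof (intro conjI allI impI)
  fix A :: "'n \<Rightarrow> real^'n^'n" and p :: "'n \<Rightarrow> 'n" assume "psd_tuple A \<and> p permutes UNIV"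
  then show "D0 (A \<circ> p) = D0 A" using D0_sym by blast
next
  fix m :: nat and A :: "nat \<Rightarrow> real^'n^'n" and lam :: "nat \<Rightarrow> real"
  show "det (\<Sum>j<m. lam j *\<^sub>R A j) =
          (\<Sum>f\<in>{f::'n \<Rightarrow> nat. \<forall>k. f k < m}. (\<Prod>k\<in>UNIV. lam (f k)) * D0 (\<lambda>k. A (f k)))"
    by (rule D0_expand[symmetric])
qed



lemma mixed_reindex:
  fixes D :: "('n::finite \<Rightarrow> real^'n^'n) \<Rightarrow> real"
  assumes D: "is_mixed_discr D" and A: "psd_tuple A" and lam: "\<And>k. 0 \<le> lam k"
  shows "det (\<Sum>k\<in>UNIV. lam k *\<^sub>R A k) = (\<Sum>\<phi>\<in>UNIV. (\<Prod>k\<in>UNIV. lam (\<phi> k)) * D (A \<circ> \<phi>))"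
proof -
  obtain h :: "'n \<Rightarrow> nat" where h: "bij_betw h UNIV {0..<card (UNIV::'n set)}"
    using ex_bij_betw_finite_nat[of "UNIV::'n set"] by auto
  define n where "n = card (UNIV::'n set)"
  define h' where "h' = inv_into UNIV h"
  have hb: "bij_betw h UNIV {..<n}" using h by (simp add: n_def atLeast0LessThan)
  have h'h: "h' (h k) = k" for k using hb by (simp add: h'_def bij_betw_def)
  have hh': "j < n \<Longrightarrow> h (h' j) = j" for j using hb unfolding h'_def
    by (simp add: bij_betw_inv_into_right)
  have hlt: "h k < n" for k using hb by (auto simp: bij_betw_def)
  define B where "B j = A (h' j)" for j
  define lm where "lm j = lam (h' j)" for j
  have psdB: "\<forall>j<n. psd (B j)" using A by (simp add: B_def psd_tuple_def)
  have lmpos: "\<forall>j<n. 0 \<le> lm j" using lam by (simp add: lm_def)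
  have id: "det (\<Sum>j<n. lm j *\<^sub>R B j) =
          (\<Sum>f\<in>{f::'n \<Rightarrow> nat. \<forall>k. f k < n}. (\<Prod>k\<in>UNIV. lm (f k)) * D (\<lambda>k. B (f k)))"
    using D psdB lmpos unfolding is_mixed_discr_def by blast
  have "(\<Sum>j<n. lm j *\<^sub>R B j) = (\<Sum>k\<in>UNIV. lam k *\<^sub>R A k)"
    using sum.reindex_bij_betw[OF hb, of "\<lambda>j. lm j *\<^sub>R B j"] by (simp add: lm_def B_def h'h)
  moreover have "(\<Sum>f\<in>{f::'n \<Rightarrow> nat. \<forall>k. f k < n}. (\<Prod>k\<in>UNIV. lm (f k)) * D (\<lambda>k. B (f k)))
      = (\<Sum>\<phi>\<in>UNIV. (\<Prod>k\<in>UNIV. lam (\<phi> k)) * D (A \<circ> \<phi>))"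
    by (rule sum.reindex_bij_witness[where i="\<lambda>\<phi>. h \<circ> \<phi>" and j="\<lambda>f. h' \<circ> f"])
       (auto simp: o_def hh' h'h hlt lm_def B_def)
  ultimately show ?thesis using id by simp
qed

lemma permutes_surj_UNIV: "(p::'n::finite \<Rightarrow> 'n) permutes UNIV \<longleftrightarrow> surj p"
proof
  assume "p permutes UNIV" then show "surj p" by (rule permutes_surj)
next
  assume s: "surj p"
  then have "inj p" by (intro finite_UNIV_surj_inj) simp_all
  with s have "bij_betw p UNIV UNIV" by (simp add: bij_betw_def)
  then show "p permutes UNIV" by (rule bij_imp_permutes) simp
qed

lemma mixed_unique_formula:
  fixes D :: "('n::finite \<Rightarrow> real^'n^'n) \<Rightarrow> real"
  assumes D: "is_mixed_discr D" and A: "psd_tuple A"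
  shows "fact CARD('n) * D A = (\<Sum>X\<in>Pow UNIV. (-1) ^ card X *
           det (\<Sum>k\<in>UNIV. (if k \<in> X then 0 else 1) *\<^sub>R A k))"
proof -
  have sym: "D (A \<circ> p) = D A" if "p permutes UNIV" for p
    using D A that unfolding is_mixed_discr_def by blast
  have prodX: "(\<Prod>k\<in>UNIV. (if \<phi> k \<in> X then 0 else 1::real)) =
       (\<Prod>x\<in>X. (if x \<in> range \<phi> then 0 else 1))" for \<phi> :: "'n \<Rightarrow> 'n" and X
  proof (cases "\<exists>k. \<phi> k \<in> X")
    case True
    then obtain k where k: "\<phi> k \<in> X" by auto
    have "(\<Prod>k\<in>UNIV. (if \<phi> k \<in> X then 0 else 1::real)) = 0"
      using k by (subst prod_zero_iff) auto
    moreover have "(\<Prod>x\<in>X. (if x \<in> range \<phi> then 0 else 1::real)) = 0"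
      using k by (subst prod_zero_iff) (auto intro: finite_subset)
    ultimately show ?thesis by (simp only:)
  next
    case False
    then show ?thesis by (auto intro!: prod.neutral)
  qed
  have inner: "(\<Sum>X\<in>Pow UNIV. (-1) ^ card X * (\<Prod>x\<in>X. (if x \<in> range \<phi> then 0 else 1::real)))
      = (if surj \<phi> then 1 else 0)" for \<phi> :: "'n \<Rightarrow> 'n"
  proof -
    have "(\<Prod>x\<in>UNIV. 1 - (if x \<in> range \<phi> then 0 else 1::real)) =
      (\<Sum>X\<in>Pow UNIV. (-1) ^ card X * (\<Prod>x\<in>X. (if x \<in> range \<phi> then 0 else 1)) * (\<Prod>x\<in>UNIV-X. 1))"
      by (rule prod_diff_conv_sum) simp
    moreover have "(\<Prod>x\<in>UNIV. 1 - (if x \<in> range \<phi> then 0 else 1::real)) = (if surj \<phi> then 1 else 0)"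
    proof (cases "surj \<phi>")
      case True then show ?thesis by simp
    next
      case False then obtain y where "y \<notin> range \<phi>" by auto
      then show ?thesis using False by (auto simp: prod_zero_iff)
    qed
    ultimately show ?thesis by simp
  qed
  have "(\<Sum>X\<in>Pow UNIV. (-1) ^ card X * det (\<Sum>k\<in>UNIV. (if k \<in> X then 0 else 1) *\<^sub>R A k))
     = (\<Sum>X\<in>Pow UNIV. (-1) ^ card X * (\<Sum>\<phi>\<in>UNIV. (\<Prod>k\<in>UNIV. (if \<phi> k \<in> X then 0 else 1)) * D (A \<circ> \<phi>)))"
    by (intro sum.cong refl arg_cong2[where f="(*)"] mixed_reindex[OF D A]) auto
  also have "\<dots> = (\<Sum>\<phi>\<in>UNIV. D (A \<circ> \<phi>) * (\<Sum>X\<in>Pow UNIV. (-1) ^ card X * (\<Prod>x\<in>X. (if x \<in> range \<phi> then 0 else 1))))"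
    by (simp add: prodX sum_distrib_left sum_distrib_right mult_ac) (rule sum.swap)
  also have "\<dots> = (\<Sum>\<phi>\<in>UNIV. if surj \<phi> then D (A \<circ> \<phi>) else 0)"
    by (simp add: inner[simplified] if_distrib cong: if_cong)
  also have "\<dots> = (\<Sum>\<phi>\<in>{p. p permutes UNIV}. D (A \<circ> \<phi>))"
    using sum.inter_filter[where P=surj and A=UNIV and g="\<lambda>\<phi>. D (A \<circ> \<phi>)"] by (simp add: permutes_surj_UNIV)
  also have "\<dots> = fact CARD('n) * D A"
    by (simp add: sym card_permutations)
  finally show ?thesis by simp
qed


lemma mixed_discr_eq_D0:
  fixes A :: "'n::finite \<Rightarrow> real^'n^'n"
  assumes "psd_tuple A" shows "mixed_discr A = D0 A"
proof -
  have M: "is_mixed_discr (mixed_discr :: ('n \<Rightarrow> real^'n^'n) \<Rightarrow> real)"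
    unfolding mixed_discr_def by (rule someI[of is_mixed_discr D0]) (rule is_mixed_D0)
  have "fact CARD('n) * mixed_discr A = fact CARD('n) * D0 A"
    using mixed_unique_formula[OF M assms] mixed_unique_formula[OF is_mixed_D0 assms] by simp
  then show ?thesis by simp
qed

lemma perm_row_upd:
  fixes A :: "'n::finite \<Rightarrow> real^'n^'n"
  assumes s: "\<sigma> permutes (UNIV::'n set)"
  shows "(\<chi> i. (A(k:=Z)) (\<sigma> i) $ i) = (\<chi> i. if i = inv \<sigma> k then Z $ i else A (\<sigma> i) $ i :: real^'n^'n)"
proof -
  have "\<sigma> i = k \<longleftrightarrow> i = inv \<sigma> k" for i
    using permutes_inverses[OF s] by metis
  then show ?thesis by (simp add: vec_eq_iff)
qed

lemma D0_add:
  fixes A :: "'n::finite \<Rightarrow> real^'n^'n"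
  shows "D0 (A(k := X + Y)) = D0 (A(k := X)) + D0 (A(k := Y))"
proof -
  have "det (\<chi> i. (A(k := X + Y)) (\<sigma> i) $ i) = det (\<chi> i. (A(k := X)) (\<sigma> i) $ i) + det (\<chi> i. (A(k := Y)) (\<sigma> i) $ i)"
    if s: "\<sigma> permutes UNIV" for \<sigma>
  proof -
    have e1: "(\<chi> i. (A(k := X + Y)) (\<sigma> i) $ i) = (\<chi> i. if i = inv \<sigma> k then X$i + Y$i else A (\<sigma> i) $ i)"
      by (subst perm_row_upd[OF s]) (simp add: vec_eq_iff)
    have e2: "(\<chi> i. (A(k := X)) (\<sigma> i) $ i) = (\<chi> i. if i = inv \<sigma> k then X$i else A (\<sigma> i) $ i)"
      using perm_row_upd[OF s, of A k X] by simp
    have e3: "(\<chi> i. (A(k := Y)) (\<sigma> i) $ i) = (\<chi> i. if i = inv \<sigma> k then Y$i else A (\<sigma> i) $ i)"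
      using perm_row_upd[OF s, of A k Y] by simp
    show ?thesis unfolding e1 e2 e3 by (rule det_row_add)
  qed
  then show ?thesis unfolding D0_def by (simp add: sum.distrib add_divide_distrib)
qed

lemma D0_zero:
  fixes A :: "'n::finite \<Rightarrow> real^'n^'n"
  shows "D0 (A(k := 0)) = 0"
  using D0_add[of A k 0 0] by simp

definition outer :: "real^'n \<Rightarrow> real^'n^'n" where
  "outer u = (\<chi> i. (u $ i) *\<^sub>R u)"

lemma D0_outer:
  fixes v :: "'n::finite \<Rightarrow> real^'n"
  shows "D0 (\<lambda>k. outer (v k)) = (det (\<chi> k. v k))\<^sup>2 / fact CARD('n)"
proof -
  let ?W = "(\<chi> k. v k) :: real^'n^'n"
  have t: "det (\<chi> i. outer (v (\<sigma> i)) $ i) = (of_int (sign \<sigma>) * (\<Prod>i\<in>UNIV. ?W $ (\<sigma> i) $ i)) * det ?W"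
    if s: "\<sigma> permutes UNIV" for \<sigma>
  proof -
    have "det (\<chi> i. outer (v (\<sigma> i)) $ i) = det (\<chi> i. (v (\<sigma> i) $ i) *s v (\<sigma> i))"
      by (simp add: outer_def scalar_mult_eq_scaleR)
    also have "\<dots> = (\<Prod>i\<in>UNIV. v (\<sigma> i) $ i) * det (\<chi> i. v (\<sigma> i))"
      by (rule det_rows_mul)
    also have "det (\<chi> i. v (\<sigma> i)) = of_int (sign \<sigma>) * det ?W"
      using det_permute_rows[OF s, of ?W] by simp
    finally show ?thesis by simp
  qed
  have "(\<Sum>\<sigma>\<in>{p. p permutes (UNIV::'n set)}. of_int (sign \<sigma>) * (\<Prod>i\<in>UNIV. ?W $ (\<sigma> i) $ i)) = det (transpose ?W)"
    unfolding det_def by (simp add: transpose_def)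
  then have "(\<Sum>\<sigma>\<in>{p. p permutes (UNIV::'n set)}. det (\<chi> i. outer (v (\<sigma> i)) $ i)) = det ?W * det ?W"
    using t by (simp add: sum_distrib_right[symmetric])
  then show ?thesis unfolding D0_def by (simp add: power2_eq_square)
qed



lemma qf: "x \<bullet> (A *v x) = (\<Sum>i\<in>UNIV. \<Sum>j\<in>UNIV. x$i * A$i$j * x$j)"
  for x :: "real^'n::finite" and A :: "real^'n^'n"
  by (simp add: inner_vec_def matrix_vector_mult_def sum_distrib_left mult_ac)

lemma psd_iff: "psd A \<longleftrightarrow> (\<forall>i j. A$i$j = A$j$i) \<and> (\<forall>x. 0 \<le> (\<Sum>i\<in>UNIV. \<Sum>j\<in>UNIV. x$i * A$i$j * x$j))"
  for A :: "real^'n::finite^'n"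
  unfolding psd_def qf by (auto simp: vec_eq_iff transpose_def)

lemma psd_zero: "psd (0::real^'n::finite^'n)"
  by (simp add: psd_iff)

lemma psd_add: "psd A \<Longrightarrow> psd B \<Longrightarrow> psd (A + B)"
  for A B :: "real^'n::finite^'n"
  unfolding psd_iff by (auto simp: algebra_simps sum.distrib intro: add_nonneg_nonneg)

lemma psd_scale: "0 \<le> t \<Longrightarrow> psd A \<Longrightarrow> psd (t *\<^sub>R A)"
  for A :: "real^'n::finite^'n"
proof -
  assume t: "0 \<le> t" and A: "psd A"
  have "(\<Sum>i\<in>UNIV. \<Sum>j\<in>UNIV. x$i * (t *\<^sub>R A)$i$j * x$j) = t * (\<Sum>i\<in>UNIV. \<Sum>j\<in>UNIV. x$i * A$i$j * x$j)" for x
    by (simp add: sum_distrib_left mult_ac)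
  then show ?thesis using t A unfolding psd_iff by auto
qed

lemma outer_nth: "outer u $ i $ j = u$i * u$j"
  by (simp add: outer_def)

lemma psd_outer: "psd (outer (u::real^'n::finite))"
proof -
  have "(\<Sum>i\<in>UNIV. \<Sum>j\<in>UNIV. x$i * outer u$i$j * x$j) = (\<Sum>i\<in>UNIV. x$i * u$i)\<^sup>2" for x
    by (simp add: outer_nth power2_eq_square sum_distrib_left sum_distrib_right mult_ac)
  then show ?thesis unfolding psd_iff by (simp add: outer_nth mult.commute)
qed

lemma outer_scale: "outer (t *\<^sub>R u) = t\<^sup>2 *\<^sub>R outer u"
  by (simp add: vec_eq_iff outer_nth power2_eq_square)

lemma outer_par: "outer (a + b) + outer (a - b) = 2 *\<^sub>R outer a + 2 *\<^sub>R outer b"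
  by (simp add: vec_eq_iff outer_nth algebra_simps)

lemma psd_sum_list: "(\<forall>u\<in>set us. psd (P u)) \<Longrightarrow> psd (sum_list (map P us))"
  for P :: "'a \<Rightarrow> real^'n::finite^'n"
  by (induction us) (auto simp: psd_zero psd_add)

lemma additive_mono_linear:
  fixes f :: "real \<Rightarrow> real"
  assumes add: "\<And>s t. 0 \<le> s \<Longrightarrow> 0 \<le> t \<Longrightarrow> f (s + t) = f s + f t"
    and nn: "\<And>t. 0 \<le> t \<Longrightarrow> 0 \<le> f t" and t: "0 \<le> t"
  shows "f t = t * f 1"
proof -
  have mono: "f s \<le> f r" if "0 \<le> s" "s \<le> r" for s r
    using add[of s "r - s"] nn[of "r - s"] that by simp
  have mult: "f (real n * s) = real n * f s" if "0 \<le> s" for n s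
  proof (induction n)
    case 0 then show ?case using add[of 0 0] by simp
  next
    case (Suc n)
    have "f (real (Suc n) * s) = f (real n * s + s)" by (simp add: algebra_simps)
    also have "\<dots> = f (real n * s) + f s" using that by (intro add) auto
    finally show ?case using Suc by (simp add: algebra_simps)
  qed
  have bnd: "\<bar>f t - t * f 1\<bar> \<le> f 1 / real n" if n: "n \<ge> 1" for n :: nat
  proof -
    have np: "real n > 0" using n by simp
    have f1n: "f (1 / real n) = f 1 / real n"
      using mult[of "1 / real n" n] np by (simp add: field_simps)
    define m where "m = nat \<lfloor>real n * t\<rfloor>"
    have m1: "real m \<le> real n * t" using t unfolding m_def by simp
    have m2: "real n * t < real m + 1" using t unfolding m_def by linarith
    have lo: "real m / real n \<le> t" using m1 np by (simp add: field_simps)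
    have hi: "t \<le> (real m + 1) / real n" using m2 np by (simp add: field_simps)
    have fm: "f (real k / real n) = real k * f 1 / real n" for k
      using mult[of "1 / real n" k] f1n np by simp
    have "f (real m / real n) \<le> f t" using lo by (intro mono) auto
    then have a: "real m * f 1 / real n \<le> f t" using fm[of m] by simp
    have "f t \<le> f (real (Suc m) / real n)" using hi t by (intro mono) (auto simp: add.commute)
    then have b: "f t \<le> (real m + 1) * f 1 / real n" using fm[of "Suc m"] by (simp add: add.commute)
    have f1: "0 \<le> f 1" using nn by simp
    have c: "real m * f 1 / real n \<le> t * f 1" using mult_right_mono[OF lo f1] by simp
    have d: "t * f 1 \<le> (real m + 1) * f 1 / real n" using mult_right_mono[OF hi f1] by simp
    have "(real m + 1) * f 1 / real n = real m * f 1 / real n + f 1 / real n"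
      by (simp add: add_divide_distrib algebra_simps)
    then show ?thesis using a b c d by linarith
  qed
  show ?thesis
  proof (rule ccontr)
    assume ne: "f t \<noteq> t * f 1"
    define d where "d = \<bar>f t - t * f 1\<bar>"
    have dp: "d > 0" using ne unfolding d_def by simp
    obtain n :: nat where n: "f 1 / d < real n" using reals_Archimedean2 by blast
    define N where "N = max n 1"
    have "f 1 / d < real N" using n unfolding N_def by linarith
    then have "f 1 < real N * d" using dp by (simp add: field_simps)
    then have "f 1 / real N < d" using N_def by (simp add: field_simps)
    moreover have "d \<le> f 1 / real N" using bnd[of N] unfolding d_def N_def by simp
    ultimately show False by simp
  qed
qed

lemma jensen_const:
  fixes \<phi> :: "real \<Rightarrow> real"
  assumes J: "\<And>s r. \<phi> (s + r) + \<phi> (s - r) = 2 * \<phi> s"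
    and nn: "\<And>x. 0 \<le> \<phi> x"
  shows "\<phi> t = \<phi> 0"
proof -
  define \<delta> where "\<delta> = \<phi> t - \<phi> 0"
  have step: "\<phi> (real k * t) = \<phi> 0 + real k * \<delta> \<and> \<phi> (real (Suc k) * t) = \<phi> 0 + real (Suc k) * \<delta>" for k
  proof (induction k)
    case 0 then show ?case by (simp add: \<delta>_def)
  next
    case (Suc k)
    have "\<phi> (real (Suc k) * t + t) + \<phi> (real (Suc k) * t - t) = 2 * \<phi> (real (Suc k) * t)" by (rule J)
    moreover have "real (Suc k) * t - t = real k * t" by (simp add: algebra_simps)
    moreover have "real (Suc k) * t + t = real (Suc (Suc k)) * t" by (simp add: algebra_simps)
    ultimately show ?case using Suc by (simp add: algebra_simps)
  qed
  have stepn: "\<phi> (- (real k * t)) = \<phi> 0 - real k * \<delta> \<and> \<phi> (- (real (Suc k) * t)) = \<phi> 0 - real (Suc k) * \<delta>" for k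
  proof (induction k)
    case 0
    have "\<phi> (0 + t) + \<phi> (0 - t) = 2 * \<phi> 0" by (rule J)
    then show ?case by (simp add: \<delta>_def)
  next
    case (Suc k)
    have "\<phi> (- (real (Suc k) * t) + t) + \<phi> (- (real (Suc k) * t) - t) = 2 * \<phi> (- (real (Suc k) * t))" by (rule J)
    moreover have "- (real (Suc k) * t) + t = - (real k * t)" by (simp add: algebra_simps)
    moreover have "- (real (Suc k) * t) - t = - (real (Suc (Suc k)) * t)" by (simp add: algebra_simps)
    ultimately show ?case using Suc by (simp add: algebra_simps)
  qed
  have "\<delta> = 0"
  proof (rule ccontr)
    assume "\<delta> \<noteq> 0"
    obtain k :: nat where k: "\<phi> 0 / \<bar>\<delta>\<bar> < real k" using reals_Archimedean2 by blast
    have ad: "\<bar>\<delta>\<bar> > 0" using \<open>\<delta> \<noteq> 0\<close> by simp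
    then have kk: "\<phi> 0 < real k * \<bar>\<delta>\<bar>" using k by (simp add: field_simps)
    show False
    proof (cases "\<delta> > 0")
      case True
      then have "\<phi> (- (real k * t)) < 0" using stepn[of k] kk by simp
      then show False using nn by (metis not_le)
    next
      case False
      then have "\<phi> (real k * t) < 0" using step[of k] kk \<open>\<delta> \<noteq> 0\<close> by simp
      then show False using nn by (metis not_le)
    qed
  qed
  then show ?thesis by (simp add: \<delta>_def)
qed



lemma row_upd_outer: "(\<lambda>j. outer ((v(k:=w)) j)) = (\<lambda>j. outer (v j))(k := outer w)"
  by (rule ext) simp

lemma psd_tuple_outer: "psd_tuple (\<lambda>k. outer (v k))"
  by (simp add: psd_tuple_def psd_outer)

lemma det_dep0:
  fixes v :: "'n::finite \<Rightarrow> real^'n"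
  assumes "m \<noteq> n"
  shows "det (\<chi> k. (v(m := r *\<^sub>R v n)) k) = 0"
proof -
  have "(\<chi> k. (v(m := r *\<^sub>R v n)) k) = (\<chi> k. if k = m then r *s v n else v k)"
    by (simp add: vec_eq_iff scalar_mult_eq_scaleR)
  moreover have "det (\<chi> k. if k = m then r *s v n else v k) = r * det (\<chi> k. if k = m then v n else v k)"
    by (rule det_row_mul)
  moreover have "det (\<chi> k. if k = m then v n else v k) = 0"
    by (rule det_identical_rows[OF assms]) (simp add: row_def vec_eq_iff assms)
  ultimately show ?thesis by simp
qed

lemma lin_mult:
  fixes A B :: "real^'n::finite^'n" and v :: "'n \<Rightarrow> real^'n"
  shows "(\<Sum>j\<in>UNIV. (A ** B)$k$j *\<^sub>R v j) = (\<Sum>l\<in>UNIV. A$k$l *\<^sub>R (\<Sum>j\<in>UNIV. B$l$j *\<^sub>R v j))"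
proof -
  have "(\<Sum>j\<in>UNIV. (A ** B)$k$j *\<^sub>R v j) = (\<Sum>j\<in>UNIV. \<Sum>l\<in>UNIV. (A$k$l * B$l$j) *\<^sub>R v j)"
    by (simp add: matrix_matrix_mult_def scaleR_sum_left)
  also have "\<dots> = (\<Sum>l\<in>UNIV. \<Sum>j\<in>UNIV. (A$k$l * B$l$j) *\<^sub>R v j)"
    by (rule sum.swap)
  also have "\<dots> = (\<Sum>l\<in>UNIV. A$k$l *\<^sub>R (\<Sum>j\<in>UNIV. B$l$j *\<^sub>R v j))"
    by (simp add: scaleR_sum_right)
  finally show ?thesis .
qed

lemma lin_diag:
  fixes A :: "real^'n::finite^'n" and v :: "'n \<Rightarrow> real^'n"
  assumes "\<And>i j. i \<noteq> j \<Longrightarrow> A$i$j = 0"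
  shows "(\<Sum>j\<in>UNIV. A$k$j *\<^sub>R v j) = A$k$k *\<^sub>R v k"
proof -
  have "(\<Sum>j\<in>UNIV. A$k$j *\<^sub>R v j) = A$k$k *\<^sub>R v k + (\<Sum>j\<in>UNIV-{k}. A$k$j *\<^sub>R v j)"
    by (subst sum.remove[of UNIV k]) auto
  also have "(\<Sum>j\<in>UNIV-{k}. A$k$j *\<^sub>R v j) = 0"
    using assms by (intro sum.neutral) auto
  finally show ?thesis by simp
qed

lemma det_diag:
  fixes A :: "real^'n::finite^'n"
  assumes "\<And>i j. i \<noteq> j \<Longrightarrow> A$i$j = 0"
  shows "det A = (\<Prod>i\<in>UNIV. A$i$i)"
proof -
  have "A = (\<chi> i. A$i$i *s (mat 1 :: real^'n^'n) $ i)"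
    using assms by (auto simp: vec_eq_iff mat_def)
  then have "det A = (\<Prod>i\<in>UNIV. A$i$i) * det (\<chi> i. (mat 1 :: real^'n^'n) $ i)"
    by (metis det_rows_mul)
  then show ?thesis by simp
qed

lemma lin_swap:
  fixes v :: "'n::finite \<Rightarrow> real^'n"
  shows "(\<Sum>j\<in>UNIV. (\<chi> i j. mat 1 $ i $ Transposition.transpose m n j :: real^'n^'n)$k$j *\<^sub>R v j)
     = v (Transposition.transpose m n k)"
proof -
  have key: "k = Transposition.transpose m n j \<longleftrightarrow> j = Transposition.transpose m n k" for j
    by (metis transpose_involutory)
  have "(\<chi> i j. mat 1 $ i $ Transposition.transpose m n j :: real^'n^'n)$k$j *\<^sub>R v j = (if j = Transposition.transpose m n k then v j else 0)" for j
    using key[of j] by (simp add: mat_def)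
  then show ?thesis by (simp add: sum.delta)
qed

lemma det_swap:
  fixes m n :: "'n::finite"
  shows "(det (\<chi> i j. mat 1 $ i $ Transposition.transpose m n j :: real^'n^'n))\<^sup>2 = 1"
proof -
  have "(\<chi> i j. mat 1 $ i $ Transposition.transpose m n j :: real^'n^'n) = (\<chi> i. (mat 1 :: real^'n^'n) $ (Transposition.transpose m n i))"
  proof -
    have key: "i = Transposition.transpose m n j \<longleftrightarrow> Transposition.transpose m n i = j" for i j
      by (metis transpose_involutory)
    show ?thesis using key by (simp add: vec_eq_iff mat_def)
  qed
  then have "det (\<chi> i j. mat 1 $ i $ Transposition.transpose m n j :: real^'n^'n) = of_int (sign (Transposition.transpose m n))"
    using det_permute_rows[OF permutes_swap_id[of m UNIV n], of "mat 1 :: real^'n^'n"] by simp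
  then show ?thesis by (simp add: sign_swap_id)
qed

lemma lin_idplus:
  fixes v :: "'n::finite \<Rightarrow> real^'n"
  assumes "m \<noteq> n"
  shows "(\<Sum>j\<in>UNIV. (\<chi> i j. if i = m \<and> j = n then c else of_bool (i = j) :: real^'n^'n)$k$j *\<^sub>R v j)
     = (v(m := v m + c *\<^sub>R v n)) k"
proof (cases "k = m")
  case True
  have "(\<Sum>j\<in>UNIV. (if j = n then c else of_bool (m = j)) *\<^sub>R v j) = (\<Sum>j\<in>UNIV. (if j = n then c *\<^sub>R v n else 0) + (if j = m then v m else 0))"
    using assms by (intro sum.cong) auto
  then show ?thesis using True by (simp add: sum.distrib)
next
  case False
  have "of_bool (k = j) *\<^sub>R v j = (if j = k then v j else 0)" for j by auto
  with False show ?thesis by (simp add: sum.delta)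
qed

lemma det_idplus:
  fixes m n :: "'n::finite"
  assumes "m \<noteq> n"
  shows "det (\<chi> i j. if i = m \<and> j = n then c else of_bool (i = j) :: real^'n^'n) = 1"
proof -
  have "(\<chi> i j. if i = m \<and> j = n then c else of_bool (i = j) :: real^'n^'n) =
     (\<chi> k. if k = m then row m (mat 1) + c *s row n (mat 1) else row k (mat 1))"
    using assms by (auto simp: vec_eq_iff row_def mat_def)
  then show ?thesis using det_row_operation[OF assms, of "mat 1 :: real^'n^'n" c] by simp
qed



lemma mv_nth: "(A *v x) $ i = A $ i \<bullet> x" for A :: "real^'n::finite^'n"
  by (simp add: matrix_vector_mult_def inner_vec_def mult.commute)

lemma sym_bil: "transpose A = A \<Longrightarrow> x \<bullet> (A *v y) = y \<bullet> (A *v x)" for A :: "real^'n::finite^'n"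
  by (metis dot_lmul_matrix inner_commute transpose_matrix_vector)

lemma qf2: "(a + t *\<^sub>R b) \<bullet> (A *v (a + t *\<^sub>R b)) =
   a \<bullet> (A *v a) + t * (a \<bullet> (A *v b)) + t * (b \<bullet> (A *v a)) + t\<^sup>2 * (b \<bullet> (A *v b))"
  for A :: "real^'n::finite^'n"
  by (simp add: matrix_vector_right_distrib matrix_vector_mult_scaleR inner_add_left inner_add_right
      power2_eq_square algebra_simps)

lemma axis_qf: "axis i 1 \<bullet> (A *v x) = A $ i \<bullet> x" for A :: "real^'n::finite^'n"
  by (simp add: inner_axis' mv_nth)

lemma axis_nth_inner: "A $ i \<bullet> axis j 1 = A $ i $ j" for A :: "real^'n::finite^'n"
  by (simp add: inner_axis)

lemma psd_diag: "psd A \<Longrightarrow> 0 \<le> A $ i $ i"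
  using axis_qf[of i A "axis i 1"] axis_nth_inner[of A i i] unfolding psd_def by metis

lemma psd_diag0:
  assumes P: "psd A" and z: "A $ i $ i = 0"
  shows "A $ i $ j = 0"
proof (rule ccontr)
  assume ne: "A $ i $ j \<noteq> 0"
  then have ij: "i \<noteq> j" using z by auto
  have T: "transpose A = A" using P by (simp add: psd_def)
  define t where "t = - (A $ j $ j + 1) / (2 * A $ i $ j)"
  have "0 \<le> (axis j 1 + t *\<^sub>R axis i 1) \<bullet> (A *v (axis j 1 + t *\<^sub>R axis i 1))"
    using P by (simp add: psd_def)
  also have "\<dots> = A $ j $ j + 2 * t * A $ i $ j"
    unfolding qf2 axis_qf axis_nth_inner using z sym_bil[OF T, of "axis j 1" "axis i 1"]
    by (simp add: axis_qf axis_nth_inner)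
  also have "\<dots> = -1" using ne by (simp add: t_def field_simps)
  finally show False by simp
qed

lemma outer_mv: "outer u *v x = (u \<bullet> x) *\<^sub>R u"
  by (simp add: vec_eq_iff mv_nth outer_def inner_scaleR_left mult.commute)

lemma psd_step:
  assumes P: "psd A" and a: "A $ i $ i > 0"
  shows "psd (A - (1 / A $ i $ i) *\<^sub>R outer (A $ i))"
proof -
  let ?a = "A $ i $ i" and ?u = "A $ i"
  have T: "transpose A = A" using P by (simp add: psd_def)
  have sym: "A $ p $ q = A $ q $ p" for p q
    using T by (metis transpose_def vec_lambda_beta)
  have "transpose (A - (1 / ?a) *\<^sub>R outer ?u) = A - (1 / ?a) *\<^sub>R outer ?u"
    by (simp add: vec_eq_iff transpose_def outer_nth sym mult.commute)
  moreover have "0 \<le> x \<bullet> ((A - (1 / ?a) *\<^sub>R outer ?u) *v x)" for x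
  proof -
    define s where "s = (?u \<bullet> x) / ?a"
    have "0 \<le> (x + (- s) *\<^sub>R axis i 1) \<bullet> (A *v (x + (- s) *\<^sub>R axis i 1))"
      using P by (simp add: psd_def)
    also have "\<dots> = x \<bullet> (A *v x) - 2 * s * (?u \<bullet> x) + s\<^sup>2 * ?a"
      unfolding qf2 using sym_bil[OF T, of x "axis i 1"]
      by (simp add: axis_qf axis_nth_inner power2_eq_square)
    also have "\<dots> = x \<bullet> (A *v x) - (?u \<bullet> x)\<^sup>2 / ?a"
      using a by (simp add: s_def power2_eq_square field_simps)
    also have "\<dots> = x \<bullet> ((A - (1 / ?a) *\<^sub>R outer ?u) *v x)"
      by (simp add: matrix_vector_mult_diff_rdistrib outer_mv inner_diff_right flip: scaleR_matrix_vector_assoc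
          power2_eq_square inner_commute)
    finally show ?thesis .
  qed
  ultimately show ?thesis by (simp add: psd_def)
qed



lemma psd_sym: "psd A \<Longrightarrow> A $ p $ q = A $ q $ p"
  unfolding psd_def by (metis transpose_def vec_lambda_beta)

lemma psd_decomp_aux:
  fixes K :: "'n::finite set"
  assumes "finite K"
  shows "\<forall>A::real^'n^'n. psd A \<and> (\<forall>p q. p \<notin> K \<or> q \<notin> K \<longrightarrow> A$p$q = 0) \<longrightarrow>
           (\<exists>us. A = sum_list (map outer us))"
  using assms
proof (induction K rule: finite_induct)
  case empty
  show ?case
  proof (intro allI impI)
    fix A :: "real^'n^'n" assume "psd A \<and> (\<forall>p q. p \<notin> {} \<or> q \<notin> {} \<longrightarrow> A$p$q = 0)"
    then have "A = sum_list (map outer [])" by (simp add: vec_eq_iff)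
    then show "\<exists>us. A = sum_list (map outer us)" by blast
  qed
next
  case (insert i K)
  show ?case
  proof (intro allI impI)
    fix A :: "real^'n^'n"
    assume H: "psd A \<and> (\<forall>p q. p \<notin> insert i K \<or> q \<notin> insert i K \<longrightarrow> A$p$q = 0)"
    then have P: "psd A" and S: "\<And>p q. p \<notin> insert i K \<or> q \<notin> insert i K \<Longrightarrow> A$p$q = 0" by auto
    have sym: "A $ p $ q = A $ q $ p" for p q using psd_sym[OF P] .
    show "\<exists>us. A = sum_list (map outer us)"
    proof (cases "A $ i $ i = 0")
      case True
      have r: "A $ i $ q = 0" for q by (rule psd_diag0[OF P True])
      have "\<forall>p q. p \<notin> K \<or> q \<notin> K \<longrightarrow> A$p$q = 0"
      proof (intro allI impI)
        fix p q assume "p \<notin> K \<or> q \<notin> K"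
        then show "A$p$q = 0" using S r sym by (metis insert_iff)
      qed
      then show ?thesis using insert.IH P by blast
    next
      case False
      define a where "a = A $ i $ i"
      have ap: "a > 0" using False psd_diag[OF P, of i] by (simp add: a_def)
      define A' where "A' = A - (1 / a) *\<^sub>R outer (A $ i)"
      have P': "psd A'" unfolding A'_def a_def by (rule psd_step[OF P]) (use ap a_def in simp)
      have A'n: "A' $ p $ q = A $ p $ q - A $ i $ p * A $ i $ q / a" for p q
        by (simp add: A'_def outer_nth)
      have "\<forall>p q. p \<notin> K \<or> q \<notin> K \<longrightarrow> A'$p$q = 0"
      proof (intro allI impI)
        fix p q assume pq: "p \<notin> K \<or> q \<notin> K"
        show "A'$p$q = 0"
        proof (cases "p = i")
          case True then show ?thesis using ap by (simp add: A'n a_def)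
        next
          case pi: False
          show ?thesis
          proof (cases "q = i")
            case True then show ?thesis using ap by (simp add: A'n a_def sym[of p i])
          next
            case qi: False
            have "A $ p $ q = 0" using S pq pi qi by auto
            moreover have "A $ i $ p * A $ i $ q = 0"
              using pq pi qi S[of i p] S[of i q] by auto
            ultimately show ?thesis by (simp add: A'n)
          qed
        qed
      qed
      then obtain us where us: "A' = sum_list (map outer us)" using insert.IH P' by blast
      have "outer ((1 / sqrt a) *\<^sub>R A $ i) = (1 / a) *\<^sub>R outer (A $ i)"
        using ap by (simp add: outer_scale power_divide)
      then have "A = sum_list (map outer ((1 / sqrt a) *\<^sub>R A $ i # us))"
        using us by (simp add: A'_def algebra_simps)
      then show ?thesis by blast
    qed
  qed
qed

lemma psd_decomp: "psd (A::real^'n::finite^'n) \<Longrightarrow> \<exists>us. A = sum_list (map outer us)"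
  using psd_decomp_aux[of "UNIV::'n set"] by auto



lemma D0_sum_list:
  fixes A :: "'n::finite \<Rightarrow> real^'n^'n"
  shows "D0 (A(k := sum_list (map P us))) = (\<Sum>u\<leftarrow>us. D0 (A(k := P u)))"
proof (induction us)
  case Nil
  have "D0 (A(k := 0)) = D0 (A(k := 0)) + D0 (A(k := 0))"
    using D0_add[of A k 0 0] by (simp only: add_0_left)
  then have z: "D0 (A(k := 0)) = 0" by linarith
  have e: "sum_list (map P []) = 0" by simp
  show ?case unfolding e by (subst z) simp
next
  case (Cons u us)
  have "D0 (A(k := sum_list (map P (u # us)))) = D0 (A(k := P u + sum_list (map P us)))"
    by (simp only: list.map sum_list.Cons)
  also have "\<dots> = D0 (A(k := P u)) + D0 (A(k := sum_list (map P us)))" by (rule D0_add)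
  also have "\<dots> = D0 (A(k := P u)) + (\<Sum>u\<leftarrow>us. D0 (A(k := P u)))" by (simp only: Cons.IH)
  also have "\<dots> = (\<Sum>u\<leftarrow>u # us. D0 (A(k := P u)))" by (simp only: list.map sum_list.Cons)
  finally show ?case .
qed

context
  fixes F :: "('n::finite \<Rightarrow> real^'n^'n) \<Rightarrow> real" and cb :: real
  assumes nonneg: "\<And>A. psd_tuple A \<Longrightarrow> 0 \<le> F A"
    and additive: "\<And>A k B. psd_tuple A \<Longrightarrow> psd B \<Longrightarrow>
                     F (A(k := A k + B)) = F A + F (A(k := B))"
    and bnd: "\<And>A. psd_tuple A \<Longrightarrow> F A \<le> cb * mixed_discr A"
begin

lemma F_add2: "psd_tuple A \<Longrightarrow> psd X \<Longrightarrow> psd Y \<Longrightarrow> F (A(k := X + Y)) = F (A(k := X)) + F (A(k := Y))"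
  using additive[of "A(k:=X)" Y k] by (simp add: psd_tuple_def)

lemma F_zero: "psd_tuple A \<Longrightarrow> F (A(k := 0)) = 0"
proof -
  assume A: "psd_tuple A"
  have "F (A(k := 0)) = F (A(k := 0)) + F (A(k := 0))"
    using F_add2[OF A psd_zero psd_zero, of k] by (simp only: add_0_left)
  then show ?thesis by linarith
qed

lemma F_hom:
  assumes A: "psd_tuple A" and X: "psd X" and t: "0 \<le> t"
  shows "F (A(k := t *\<^sub>R X)) = t * F (A(k := X))"
proof -
  have "F (A(k := t *\<^sub>R X)) = t * F (A(k := 1 *\<^sub>R X))"
  proof (rule additive_mono_linear[where f="\<lambda>t. F (A(k := t *\<^sub>R X))", OF _ _ t])
    fix s r :: real assume "0 \<le> s" "0 \<le> r"
    then show "F (A(k := (s + r) *\<^sub>R X)) = F (A(k := s *\<^sub>R X)) + F (A(k := r *\<^sub>R X))"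
      using F_add2[OF A psd_scale[OF _ X] psd_scale[OF _ X], of s r k] by (simp add: scaleR_add_left)
  next
    fix s :: real assume "0 \<le> s"
    then show "0 \<le> F (A(k := s *\<^sub>R X))"
      using A psd_scale[OF _ X] by (intro nonneg) (auto simp: psd_tuple_def)
  qed
  then show ?thesis by simp
qed

lemma F_sum_list: "psd_tuple A \<Longrightarrow> F (A(k := sum_list (map outer us))) = (\<Sum>u\<leftarrow>us. F (A(k := outer u)))"
proof (induction us)
  case Nil
  have e: "sum_list (map outer []) = 0" by simp
  show ?case unfolding e by (subst F_zero[OF Nil]) simp
next
  case (Cons u us)
  have "F (A(k := sum_list (map outer (u # us)))) = F (A(k := outer u + sum_list (map outer us)))"
    by (simp only: list.map sum_list.Cons)
  also have "\<dots> = F (A(k := outer u)) + F (A(k := sum_list (map outer us)))"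
    by (rule F_add2[OF Cons.prems psd_outer psd_sum_list]) (simp add: psd_outer)
  also have "\<dots> = F (A(k := outer u)) + (\<Sum>u\<leftarrow>us. F (A(k := outer u)))" by (simp only: Cons.IH[OF Cons.prems])
  also have "\<dots> = (\<Sum>u\<leftarrow>u # us. F (A(k := outer u)))" by (simp only: list.map sum_list.Cons)
  finally show ?case .
qed

definition G :: "('n \<Rightarrow> real^'n) \<Rightarrow> real" where
  "G v = F (\<lambda>k. outer (v k))"

lemma G_nonneg: "0 \<le> G v"
  unfolding G_def by (rule nonneg[OF psd_tuple_outer])

lemma G_det0: "det (\<chi> k. v k) = 0 \<Longrightarrow> G v = 0"
proof -
  assume d: "det (\<chi> k. v k) = 0"
  have "G v \<le> cb * mixed_discr (\<lambda>k. outer (v k))"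
    unfolding G_def by (rule bnd[OF psd_tuple_outer])
  also have "\<dots> = 0"
    by (simp add: mixed_discr_eq_D0[OF psd_tuple_outer] D0_outer d)
  finally show ?thesis using G_nonneg[of v] by simp
qed

lemma G_scale: "G (v(k := t *\<^sub>R w)) = t\<^sup>2 * G (v(k := w))"
  unfolding G_def row_upd_outer outer_scale
  by (rule F_hom[OF psd_tuple_outer psd_outer]) simp

lemma G_par: "G (v(k := a + b)) + G (v(k := a - b)) = 2 * G (v(k := a)) + 2 * G (v(k := b))"
proof -
  have "G (v(k := a + b)) + G (v(k := a - b)) = F ((\<lambda>j. outer (v j))(k := outer (a + b) + outer (a - b)))"
    unfolding G_def row_upd_outer by (rule F_add2[OF psd_tuple_outer psd_outer psd_outer, symmetric])
  also have "\<dots> = F ((\<lambda>j. outer (v j))(k := 2 *\<^sub>R outer a + 2 *\<^sub>R outer b))"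
    by (simp add: outer_par)
  also have "\<dots> = F ((\<lambda>j. outer (v j))(k := 2 *\<^sub>R outer a)) + F ((\<lambda>j. outer (v j))(k := 2 *\<^sub>R outer b))"
    by (rule F_add2[OF psd_tuple_outer psd_scale psd_scale]) (simp_all add: psd_outer)
  also have "\<dots> = 2 * G (v(k := a)) + 2 * G (v(k := b))"
    unfolding G_def row_upd_outer
    by (simp add: F_hom[OF psd_tuple_outer psd_outer])
  finally show ?thesis .
qed

lemma G_shear:
  assumes mn: "m \<noteq> n"
  shows "G (v(m := v m + t *\<^sub>R v n)) = G v"
proof -
  define \<phi> where "\<phi> s = G (v(m := v m + s *\<^sub>R v n))" for s
  have J: "\<phi> (s + r) + \<phi> (s - r) = 2 * \<phi> s" for s r
  proof -
    have "G (v(m := (v m + s *\<^sub>R v n) + r *\<^sub>R v n)) + G (v(m := (v m + s *\<^sub>R v n) - r *\<^sub>R v n)) =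
          2 * G (v(m := v m + s *\<^sub>R v n)) + 2 * G (v(m := r *\<^sub>R v n))"
      by (rule G_par)
    moreover have "G (v(m := r *\<^sub>R v n)) = 0"
      by (rule G_det0[OF det_dep0[OF mn]])
    moreover have "(v m + s *\<^sub>R v n) + r *\<^sub>R v n = v m + (s + r) *\<^sub>R v n"
      by (simp add: algebra_simps)
    moreover have "(v m + s *\<^sub>R v n) - r *\<^sub>R v n = v m + (s - r) *\<^sub>R v n"
      by (simp add: algebra_simps)
    ultimately show ?thesis by (simp add: \<phi>_def)
  qed
  have "\<phi> t = \<phi> 0" by (rule jensen_const[OF J]) (simp add: \<phi>_def G_nonneg)
  then show ?thesis by (simp add: \<phi>_def)
qed

lemma G_swap:
  assumes mn: "m \<noteq> n"
  shows "G (\<lambda>k. v (Transposition.transpose m n k)) = G v"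
proof -
  define v1 where "v1 = v(m := v m + 1 *\<^sub>R v n)"
  define v2 where "v2 = v1(n := v1 n + (-1) *\<^sub>R v1 m)"
  define v3 where "v3 = v2(m := v2 m + 1 *\<^sub>R v2 n)"
  have e1: "G v1 = G v" unfolding v1_def by (rule G_shear[OF mn])
  have e2: "G v2 = G v1" unfolding v2_def using mn by (intro G_shear) auto
  have e3: "G v3 = G v2" unfolding v3_def by (rule G_shear[OF mn])
  have v3e: "v3 = v(m := v n, n := - v m)"
    using mn by (auto simp: v1_def v2_def v3_def)
  have "G (v3(n := (-1) *\<^sub>R (- v m))) = (-1)\<^sup>2 * G (v3(n := - v m))"
    by (rule G_scale)
  moreover have "v3(n := - v m) = v3" using v3e by auto
  moreover have "v3(n := (-1) *\<^sub>R (- v m)) = (\<lambda>k. v (Transposition.transpose m n k))"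
    using mn by (auto simp: v3e transpose_def)
  ultimately show ?thesis using e1 e2 e3 by simp
qed

lemma G_diag: "G (\<lambda>k. if k \<in> S then d k *\<^sub>R v k else v k) = (\<Prod>k\<in>S. d k)\<^sup>2 * G v"
proof (induction S rule: infinite_finite_induct)
  case (infinite S) then show ?case by simp
next
  case empty then show ?case by simp
next
  case (insert x S)
  have "(\<lambda>k. if k \<in> insert x S then d k *\<^sub>R v k else v k) =
        (\<lambda>k. if k \<in> S then d k *\<^sub>R v k else v k)(x := d x *\<^sub>R v x)" by auto
  moreover have "(\<lambda>k. if k \<in> S then d k *\<^sub>R v k else v k)(x := v x) = (\<lambda>k. if k \<in> S then d k *\<^sub>R v k else v k)"
    using insert.hyps by auto
  ultimately show ?case
    using G_scale[of "\<lambda>k. if k \<in> S then d k *\<^sub>R v k else v k" x "d x" "v x"] insert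
    by (simp add: power_mult_distrib)
qed

lemma G_lin: "G (\<lambda>k. \<Sum>j\<in>UNIV. A$k$j *\<^sub>R v j) = (det A)\<^sup>2 * G v"
proof -
  have "\<forall>v. G (\<lambda>k. \<Sum>j\<in>UNIV. A$k$j *\<^sub>R v j) = (det A)\<^sup>2 * G v"
  proof (rule induct_matrix_elementary)
    fix A B :: "real^'n^'n"
    assume IH1: "\<forall>v. G (\<lambda>k. \<Sum>j\<in>UNIV. A$k$j *\<^sub>R v j) = (det A)\<^sup>2 * G v"
      and IH2: "\<forall>v. G (\<lambda>k. \<Sum>j\<in>UNIV. B$k$j *\<^sub>R v j) = (det B)\<^sup>2 * G v"
    show "\<forall>v. G (\<lambda>k. \<Sum>j\<in>UNIV. (A ** B)$k$j *\<^sub>R v j) = (det (A ** B))\<^sup>2 * G v"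
    proof
      fix v :: "'n \<Rightarrow> real^'n"
      have "G (\<lambda>k. \<Sum>j\<in>UNIV. (A ** B)$k$j *\<^sub>R v j) =
            G (\<lambda>k. \<Sum>l\<in>UNIV. A$k$l *\<^sub>R (\<lambda>l. \<Sum>j\<in>UNIV. B$l$j *\<^sub>R v j) l)"
        by (simp add: lin_mult)
      also have "\<dots> = (det A)\<^sup>2 * G (\<lambda>l. \<Sum>j\<in>UNIV. B$l$j *\<^sub>R v j)"
        using spec[OF IH1, of "\<lambda>l. \<Sum>j\<in>UNIV. B$l$j *\<^sub>R v j"] by simp
      also have "\<dots> = (det A)\<^sup>2 * ((det B)\<^sup>2 * G v)" using IH2 by simp
      finally show "G (\<lambda>k. \<Sum>j\<in>UNIV. (A ** B)$k$j *\<^sub>R v j) = (det (A ** B))\<^sup>2 * G v"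
        by (simp add: det_mul power_mult_distrib)
    qed
  next
    fix A :: "real^'n^'n" and i assume zero_row: "row i A = 0"
    show "\<forall>v. G (\<lambda>k. \<Sum>j\<in>UNIV. A$k$j *\<^sub>R v j) = (det A)\<^sup>2 * G v"
    proof
      fix v :: "'n \<Rightarrow> real^'n"
      have Ai: "A $ i $ j = 0" for j using zero_row by (simp add: row_def vec_eq_iff)
      have "det A = 0" using zero_row by (rule det_zero_row)
      moreover have r: "row i ((\<chi> k. \<Sum>j\<in>UNIV. A$k$j *\<^sub>R v j) :: real^'n^'n) = 0"
        by (simp add: row_def vec_eq_iff Ai)
      moreover have "det (\<chi> k. \<Sum>j\<in>UNIV. A$k$j *\<^sub>R v j) = 0"
        using det_zero_row(1)[OF r] .
      ultimately show "G (\<lambda>k. \<Sum>j\<in>UNIV. A$k$j *\<^sub>R v j) = (det A)\<^sup>2 * G v"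
        using G_det0 by simp
    qed
  next
    fix A :: "real^'n^'n" assume diagonal: "\<And>i j. i \<noteq> j \<Longrightarrow> A$i$j = 0"
    show "\<forall>v. G (\<lambda>k. \<Sum>j\<in>UNIV. A$k$j *\<^sub>R v j) = (det A)\<^sup>2 * G v"
    proof
      fix v :: "'n \<Rightarrow> real^'n"
      have e: "(\<lambda>k. \<Sum>j\<in>UNIV. A$k$j *\<^sub>R v j) = (\<lambda>k. if k \<in> UNIV then A$k$k *\<^sub>R v k else v k)"
      proof (rule ext)
        fix k
        show "(\<Sum>j\<in>UNIV. A$k$j *\<^sub>R v j) = (if k \<in> UNIV then A$k$k *\<^sub>R v k else v k)"
          using lin_diag[OF diagonal, where k=k and v=v] by simp
      qed
      have "G (\<lambda>k. \<Sum>j\<in>UNIV. A$k$j *\<^sub>R v j) = G (\<lambda>k. if k \<in> UNIV then A$k$k *\<^sub>R v k else v k)"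
        by (simp only: e)
      also have "\<dots> = (\<Prod>k\<in>UNIV. A$k$k)\<^sup>2 * G v" by (rule G_diag)
      finally show "G (\<lambda>k. \<Sum>j\<in>UNIV. A$k$j *\<^sub>R v j) = (det A)\<^sup>2 * G v"
        by (simp add: det_diag[OF diagonal])
    qed
  next
    fix m n :: 'n assume swap1: "m \<noteq> n"
    show "\<forall>v. G (\<lambda>k. \<Sum>j\<in>UNIV. (\<chi> i j. mat 1 $ i $ Transposition.transpose m n j :: real^'n^'n)$k$j *\<^sub>R v j) =
            (det (\<chi> i j. mat 1 $ i $ Transposition.transpose m n j :: real^'n^'n))\<^sup>2 * G v"
    proof
      fix v :: "'n \<Rightarrow> real^'n"
      show "G (\<lambda>k. \<Sum>j\<in>UNIV. (\<chi> i j. mat 1 $ i $ Transposition.transpose m n j :: real^'n^'n)$k$j *\<^sub>R v j) =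
            (det (\<chi> i j. mat 1 $ i $ Transposition.transpose m n j :: real^'n^'n))\<^sup>2 * G v"
      proof -
        have e: "(\<lambda>k. \<Sum>j\<in>UNIV. (\<chi> i j. mat 1 $ i $ Transposition.transpose m n j :: real^'n^'n)$k$j *\<^sub>R v j) = (\<lambda>k. v (Transposition.transpose m n k))"
          by (rule ext) (rule lin_swap)
        show ?thesis unfolding e det_swap G_swap[OF swap1, of v] by simp
      qed
    qed
  next
    fix m n :: 'n and c :: real assume idplus: "m \<noteq> n"
    show "\<forall>v. G (\<lambda>k. \<Sum>j\<in>UNIV. (\<chi> i j. if i = m \<and> j = n then c else of_bool (i = j) :: real^'n^'n)$k$j *\<^sub>R v j) =
            (det (\<chi> i j. if i = m \<and> j = n then c else of_bool (i = j) :: real^'n^'n))\<^sup>2 * G v"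
    proof
      fix v :: "'n \<Rightarrow> real^'n"
      show "G (\<lambda>k. \<Sum>j\<in>UNIV. (\<chi> i j. if i = m \<and> j = n then c else of_bool (i = j) :: real^'n^'n)$k$j *\<^sub>R v j) =
            (det (\<chi> i j. if i = m \<and> j = n then c else of_bool (i = j) :: real^'n^'n))\<^sup>2 * G v"
      proof -
        have e: "(\<lambda>k. \<Sum>j\<in>UNIV. (\<chi> i j. if i = m \<and> j = n then c else of_bool (i = j) :: real^'n^'n)$k$j *\<^sub>R v j) = v(m := v m + c *\<^sub>R v n)"
          by (rule ext) (rule lin_idplus[OF idplus])
        show ?thesis unfolding e det_idplus[OF idplus] G_shear[OF idplus, of v c] by simp
      qed
    qed
  qed
  then show ?thesis by blast
qed

lemma G_formula: "G v = (det (\<chi> k. v k))\<^sup>2 * G (\<lambda>k. axis k 1)"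
proof -
  have "v k = (\<Sum>j\<in>UNIV. (\<chi> k. v k)$k$j *\<^sub>R axis j 1)" for k
    using basis_expansion[of "v k"] by (simp add: scalar_mult_eq_scaleR)
  then have "v = (\<lambda>k. \<Sum>j\<in>UNIV. (\<chi> k. v k)$k$j *\<^sub>R axis j 1)" by (rule ext)
  then have "G v = G (\<lambda>k. \<Sum>j\<in>UNIV. (\<chi> k. v k)$k$j *\<^sub>R axis j 1)" by (rule arg_cong)
  also have "\<dots> = (det (\<chi> k. v k))\<^sup>2 * G (\<lambda>j. axis j 1)" by (rule G_lin)
  finally show ?thesis .
qed

definition aa :: real where "aa = G (\<lambda>k. axis k 1) * fact CARD('n)"

lemma F_rank1: "F (\<lambda>k. outer (v k)) = aa * D0 (\<lambda>k. outer (v k))"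
  using G_formula[of v] unfolding G_def[symmetric] aa_def D0_outer by simp

lemma F_eq_aux:
  fixes S :: "'n set"
  assumes "finite S"
  shows "\<forall>A. psd_tuple A \<and> (\<forall>k. k \<notin> S \<longrightarrow> (\<exists>u. A k = outer u)) \<longrightarrow> F A = aa * D0 A"
  using assms
proof (induction S rule: finite_induct)
  case empty
  show ?case
  proof (intro allI impI)
    fix A :: "'n \<Rightarrow> real^'n^'n"
    assume "psd_tuple A \<and> (\<forall>k. k \<notin> {} \<longrightarrow> (\<exists>u. A k = outer u))"
    then have "\<forall>k. \<exists>u. A k = outer u" by simp
    then obtain v where "\<forall>k. A k = outer (v k)" by metis
    then have "A = (\<lambda>k. outer (v k))" by auto
    then show "F A = aa * D0 A" using F_rank1 by simp
  qed
next
  case (insert x S)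
  show ?case
  proof (intro allI impI)
    fix A :: "'n \<Rightarrow> real^'n^'n"
    assume H: "psd_tuple A \<and> (\<forall>k. k \<notin> insert x S \<longrightarrow> (\<exists>u. A k = outer u))"
    then have A: "psd_tuple A" by simp
    obtain us where us: "A x = sum_list (map outer us)"
      using psd_decomp A by (auto simp: psd_tuple_def)
    have Ae: "A = A(x := sum_list (map outer us))" using us by auto
    have IH: "F (A(x := outer u)) = aa * D0 (A(x := outer u))" for u
    proof -
      have p: "psd_tuple (A(x := outer u))" using A by (simp add: psd_tuple_def psd_outer)
      have r: "\<forall>k. k \<notin> S \<longrightarrow> (\<exists>u'. (A(x := outer u)) k = outer u')"
        using H by auto
      show ?thesis using insert.IH p r by blast
    qed
    have "F A = (\<Sum>u\<leftarrow>us. F (A(x := outer u)))"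
      using F_sum_list[OF A, of x us] Ae by simp
    also have "\<dots> = (\<Sum>u\<leftarrow>us. aa * D0 (A(x := outer u)))" using IH by simp
    also have "\<dots> = aa * D0 (A(x := sum_list (map outer us)))"
      by (simp add: D0_sum_list sum_list_const_mult)
    also have "\<dots> = aa * D0 A" using Ae by simp
    finally show "F A = aa * D0 A" .
  qed
qed

lemma F_eq: "psd_tuple A \<Longrightarrow> F A = aa * mixed_discr A"
  using F_eq_aux[of UNIV] by (simp add: mixed_discr_eq_D0)

end

theorem corollary3:
  fixes F :: "('n::finite \<Rightarrow> real^'n^'n) \<Rightarrow> real"
  assumes nonneg: "\<And>A. psd_tuple A \<Longrightarrow> 0 \<le> F A"
    and additive: "\<And>A k B. psd_tuple A \<Longrightarrow> psd B \<Longrightarrow>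
                     F (A(k := A k + B)) = F A + F (A(k := B))"
    and bound: "\<exists>c. \<forall>A. psd_tuple A \<longrightarrow> F A \<le> c * mixed_discr A"
  shows "\<exists>a. \<forall>A. psd_tuple A \<longrightarrow> F A = a * mixed_discr A"
proof -
  obtain c where c: "\<forall>A. psd_tuple A \<longrightarrow> F A \<le> c * mixed_discr A" using bound by blast
  have c': "\<And>A. psd_tuple A \<Longrightarrow> F A \<le> c * mixed_discr A" using c by blast
  show ?thesis using F_eq[OF nonneg additive c'] by blast
qed


end
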